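(* Let $u_0\in L^\infty(\Omega)\cap W_0^{1,2}(\Omega)$ with $u_0\ge0$, $\frac1{u_0}\in L^\infty_{loc}(\Omega)$, $\|u_0\|_{\Phi,\infty}<\infty$, and let $T_{\max}\in(0,\infty]$ and $u$ be the locally positive weak solution in $\Omega\times(0,T_{\max})$ provided by the existence theorem described in the context. If $\limsup_{t\nearrow T_{\max}}\|u(\cdot,t)\|_{L^\infty(\Omega)}=\infty$, then also $$\limsup_{t\nearrow T_{\max}}\int_\Omega|\nabla u(x,t)|^2\,dx=\infty.$$
   Context: $\Omega\subset\mathbb{R}^N$ is a bounded smooth domain; $\Phi$ solves $-\Delta\Phi=1$ in $\Omega$, $\Phi=0$ on $\partial\Omega$; $\|v\|_{\Phi,\infty}:=\operatorname{ess\,sup}_\Omega|v/\Phi|$. A weak solution of $u_t=u\Delta u+u\int_\Omega|\nabla u|^2$, $u=0$ on $\partial\Omega$, $u(\cdot,0)=u_0$ in $\Omega\times(0,T)$ is a nonnegative $u\in L^\infty_{loc}(\bar\Omega\times[0,T))\cap L^2_{loc}([0,T);W_0^{1,2}(\Omega))$ with $u_t\in L^2_{loc}(\bar\Omega\times[0,T))$ and $-\int_0^T\!\int_\Omega u\varphi_t+\int_0^T\!\int_\Omega\nabla u\cdot\nabla(u\varphi)=\int_\Omega u_0\varphi(\cdot,0)+\int_0^T(\int_\Omega u\varphi)(\int_\Omega|\nabla u|^2)dt$ for all $\varphi\in C_0^\infty(\Omega\times[0,T))$; locally positive means $1/u\in L^\infty_{loc}(\Omega\times[0,T])$. The existence theorem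 provides $T_{\max}$ and $u$ such that: either $T_{\max}=\infty$ or $\limsup_{t\nearrow T_{\max}}\|u(\cdot,t)\|_{L^\infty}=\infty$; for each smoothly bounded $\Omega'\subset\subset\Omega$ (with $\phi$ solving $-\Delta\phi=1$ in $\Omega'$, $\phi=0$ on $\partial\Omega'$) there is $C_{\Omega'}>0$ with $\int_\Omega|\nabla u(\cdot,t)|^2\le\int_\Omega|\nabla u_0|^2\exp[\frac1{2C_{\Omega'}}(\sup_{\tau\in(0,t)}\int_\Omega u(\cdot,\tau))(\int_{\Omega'}\phi\ln u(\cdot,t)-\int_{\Omega'}\phi\ln u_0+\int_0^t\int_{\Omega'}u)]$ for a.e. $t$; and $\|u(\cdot,t)\|_{\Phi,\infty}\le\max\{\|u_0\|_{\Phi,\infty},\sup_{\tau\in(0,t)}\int_\Omega|\nabla u(\cdot,\tau)|^2\}$ for a.e. $t\in(0,T_{\max})$. *)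

theory Defs
  imports "HOL-Analysis.Analysis"
begin

definition pd :: "'a::euclidean_space \<Rightarrow> ('a \<Rightarrow> real) \<Rightarrow> 'a \<Rightarrow> real" where
  "pd v f x = deriv (\<lambda>h. f (x + h *\<^sub>R v)) 0"

definition grad :: "('a::euclidean_space \<Rightarrow> real) \<Rightarrow> 'a \<Rightarrow> 'a" where
  "grad f x = (\<Sum>b\<in>Basis. pd b f x *\<^sub>R b)"

definition laplacian :: "('a::euclidean_space \<Rightarrow> real) \<Rightarrow> 'a \<Rightarrow> real" where
  "laplacian f x = (\<Sum>b\<in>Basis. pd b (pd b f) x)"

definition Ck_on :: "nat \<Rightarrow> 'a::euclidean_space set \<Rightarrow> ('a \<Rightarrow> real) \<Rightarrow> bool" where
  "Ck_on k S f \<longleftrightarrow> (\<forall>vs. set vs \<subseteq> Basis \<and> length vs \<le> k \<longrightarrow>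
      continuous_on S (foldr pd vs f) \<and>
      (length vs < k \<longrightarrow> (\<forall>v\<in>Basis. \<forall>x\<in>S.
          (\<lambda>h. foldr pd vs f (x + h *\<^sub>R v)) differentiable (at 0))))"

definition smooth_on :: "'a::euclidean_space set \<Rightarrow> ('a \<Rightarrow> real) \<Rightarrow> bool" where
  "smooth_on S f \<longleftrightarrow> (\<forall>k. Ck_on k S f)"

text \<open>Bounded domain with smooth boundary (via a global smooth defining function).\<close>
definition smooth_domain :: "'a::euclidean_space set \<Rightarrow> bool" where
  "smooth_domain \<Omega> \<longleftrightarrow> open \<Omega> \<and> connected \<Omega> \<and> bounded \<Omega> \<and> \<Omega> \<noteq> {} \<and>
     (\<exists>\<rho>. smooth_on UNIV \<rho> \<and> \<Omega> = {x. \<rho> x < 0} \<and> (\<forall>x. \<rho> x = 0 \<longrightarrow> grad \<rho> x \<noteq> 0))"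

definition torsion_function :: "'a::euclidean_space set \<Rightarrow> ('a \<Rightarrow> real) \<Rightarrow> bool" where
  "torsion_function \<Omega> \<Phi> \<longleftrightarrow> Ck_on 2 \<Omega> \<Phi> \<and> continuous_on (closure \<Omega>) \<Phi> \<and>
     (\<forall>x\<in>\<Omega>. - laplacian \<Phi> x = 1) \<and> (\<forall>x\<in>frontier \<Omega>. \<Phi> x = 0)"

text \<open>Essential supremum of f over S w.r.t. M (no measurability requirement).\<close>
definition ess_sup :: "'b measure \<Rightarrow> 'b set \<Rightarrow> ('b \<Rightarrow> ereal) \<Rightarrow> ereal" where
  "ess_sup M S f = Inf {z. AE x in M. x \<in> S \<longrightarrow> f x \<le> z}"

definition Linf_norm :: "'a::euclidean_space set \<Rightarrow> ('a \<Rightarrow> real) \<Rightarrow> ereal" where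
  "Linf_norm \<Omega> f = ess_sup lebesgue \<Omega> (\<lambda>x. ereal \<bar>f x\<bar>)"

definition Phi_norm :: "'a::euclidean_space set \<Rightarrow> ('a \<Rightarrow> real) \<Rightarrow> ('a \<Rightarrow> real) \<Rightarrow> ereal" where
  "Phi_norm \<Omega> \<Phi> f = ess_sup lebesgue \<Omega> (\<lambda>x. ereal \<bar>f x / \<Phi> x\<bar>)"

definition test_fun :: "'a::euclidean_space set \<Rightarrow> ('a \<Rightarrow> real) \<Rightarrow> bool" where
  "test_fun U \<psi> \<longleftrightarrow> smooth_on UNIV \<psi> \<and> compact (closure {x. \<psi> x \<noteq> 0}) \<and>
     closure {x. \<psi> x \<noteq> 0} \<subseteq> U"

definition W12_0 :: "'a::euclidean_space set \<Rightarrow> ('a \<Rightarrow> real) \<Rightarrow> ('a \<Rightarrow> 'a) \<Rightarrow> bool" where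
  "W12_0 \<Omega> f g \<longleftrightarrow> set_borel_measurable lebesgue \<Omega> f \<and> set_borel_measurable lebesgue \<Omega> g \<and>
     set_integrable lebesgue \<Omega> (\<lambda>x. (f x)\<^sup>2) \<and> set_integrable lebesgue \<Omega> (\<lambda>x. (norm (g x))\<^sup>2) \<and>
     (\<exists>\<psi>. (\<forall>k. test_fun \<Omega> (\<psi> k)) \<and>
        (\<lambda>k. LINT x:\<Omega>|lebesgue. (\<psi> k x - f x)\<^sup>2 + (norm (grad (\<psi> k) x - g x))\<^sup>2) \<longlonglongrightarrow> 0)"

definition tint :: "ereal \<Rightarrow> real set" where
  "tint T = {t. 0 < t \<and> ereal t < T}"

definition xgrad :: "('a::euclidean_space \<times> real \<Rightarrow> real) \<Rightarrow> 'a \<times> real \<Rightarrow> 'a" where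
  "xgrad \<phi> p = (\<Sum>b\<in>Basis. pd (b, 0) \<phi> p *\<^sub>R b)"

definition tderiv :: "('a::euclidean_space \<times> real \<Rightarrow> real) \<Rightarrow> 'a \<times> real \<Rightarrow> real" where
  "tderiv \<phi> p = pd (0, 1) \<phi> p"

text \<open>Weak solution of u_t = u \<Delta>u + u \<integral>|\<nabla>u|^2, u = 0 on \<partial>\<Omega>, u(0) = u0 in \<Omega> \<times> (0,T);
  Du is the spatial (weak) gradient of u.  Test functions in C_0^\<infinity>(\<Omega>\<times>[0,T)) are represented
  by smooth functions on \<real>^N \<times> \<real> with compact support in \<Omega> \<times> (-\<infinity>,T).\<close>
definition weak_solution ::
  "'a::euclidean_space set \<Rightarrow> ereal \<Rightarrow> ('a \<Rightarrow> real) \<Rightarrow> ('a \<Rightarrow> real \<Rightarrow> real) \<Rightarrow> ('a \<Rightarrow> real \<Rightarrow> 'a) \<Rightarrow> bool"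
where
  "weak_solution \<Omega> T u0 u Du \<longleftrightarrow>
     \<comment> \<open>nonnegativity\<close>
     (AE p in lebesgue. p \<in> \<Omega> \<times> tint T \<longrightarrow> u (fst p) (snd p) \<ge> 0) \<and>
     \<comment> \<open>u \<in> L^\<infinity>_loc(\<Omega>\<times>[0,T))\<close>
     (\<forall>T'. 0 < T' \<and> ereal T' < T \<longrightarrow>
        set_borel_measurable lebesgue (\<Omega> \<times> {0<..<T'}) (\<lambda>p. u (fst p) (snd p)) \<and>
        (\<exists>M. AE p in lebesgue. p \<in> \<Omega> \<times> {0<..<T'} \<longrightarrow> \<bar>u (fst p) (snd p)\<bar> \<le> M)) \<and>
     \<comment> \<open>u \<in> L^2_loc([0,T); W_0^{1,2}(\<Omega>))\<close>
     (\<forall>T'. 0 < T' \<and> ereal T' < T \<longrightarrow>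
        set_borel_measurable lebesgue (\<Omega> \<times> {0<..<T'}) (\<lambda>p. Du (fst p) (snd p)) \<and>
        set_integrable lebesgue (\<Omega> \<times> {0<..<T'}) (\<lambda>p. (norm (Du (fst p) (snd p)))\<^sup>2) \<and>
        (AE t in lebesgue. t \<in> {0<..<T'} \<longrightarrow> W12_0 \<Omega> (\<lambda>x. u x t) (\<lambda>x. Du x t))) \<and>
     \<comment> \<open>u_t \<in> L^2_loc(\<Omega>\<times>[0,T))\<close>
     (\<exists>ut :: 'a \<Rightarrow> real \<Rightarrow> real.
        (\<forall>T'. 0 < T' \<and> ereal T' < T \<longrightarrow>
           set_borel_measurable lebesgue (\<Omega> \<times> {0<..<T'}) (\<lambda>p. ut (fst p) (snd p)) \<and>
           set_integrable lebesgue (\<Omega> \<times> {0<..<T'}) (\<lambda>p. (ut (fst p) (snd p))\<^sup>2)) \<and>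
        (\<forall>\<psi>. test_fun (\<Omega> \<times> tint T) \<psi> \<longrightarrow>
           (LINT p:\<Omega> \<times> tint T|lebesgue. u (fst p) (snd p) * tderiv \<psi> p) =
           - (LINT p:\<Omega> \<times> tint T|lebesgue. ut (fst p) (snd p) * \<psi> p))) \<and>
     \<comment> \<open>the weak formulation\<close>
     (\<forall>\<phi>. test_fun (\<Omega> \<times> {t. ereal t < T}) \<phi> \<longrightarrow>
        - (LINT p:\<Omega> \<times> tint T|lebesgue. u (fst p) (snd p) * tderiv \<phi> p)
        + (LINT p:\<Omega> \<times> tint T|lebesgue.
             Du (fst p) (snd p) \<bullet> (\<phi> p *\<^sub>R Du (fst p) (snd p) + u (fst p) (snd p) *\<^sub>R xgrad \<phi> p))
        = (LINT x:\<Omega>|lebesgue. u0 x * \<phi> (x, 0))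
        + (LINT t:tint T|lebesgue.
             (LINT x:\<Omega>|lebesgue. u x t * \<phi> (x, t)) * (LINT x:\<Omega>|lebesgue. (norm (Du x t))\<^sup>2)))"

definition locally_positive :: "'a::euclidean_space set \<Rightarrow> ereal \<Rightarrow> ('a \<Rightarrow> real \<Rightarrow> real) \<Rightarrow> bool" where
  "locally_positive \<Omega> T u \<longleftrightarrow>
     (\<forall>K T'. compact K \<and> K \<subseteq> \<Omega> \<and> 0 < T' \<and> ereal T' \<le> T \<longrightarrow>
        (\<exists>M. AE p in lebesgue. p \<in> K \<times> {0<..<T'} \<longrightarrow>
              u (fst p) (snd p) > 0 \<and> 1 / u (fst p) (snd p) \<le> M))"

definition ess_limsup_left :: "ereal \<Rightarrow> (real \<Rightarrow> ereal) \<Rightarrow> ereal" where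
  "ess_limsup_left T f = (INF a\<in>{a. 0 < a \<and> ereal a < T}. ess_sup lebesgue {t. a < t \<and> ereal t < T} f)"

definition energy :: "'a::euclidean_space set \<Rightarrow> ('a \<Rightarrow> real \<Rightarrow> 'a) \<Rightarrow> real \<Rightarrow> real" where
  "energy \<Omega> Du t = (LINT x:\<Omega>|lebesgue. (norm (Du x t))\<^sup>2)"

end

theory Submission imports Defs begin


lemma slice_AE:
  assumes "AE p in (lebesgue :: ('a::euclidean_space \<times> real) measure). P (fst p) (snd p)"
  shows "AE t in (lebesgue::real measure). AE x in (lebesgue::'a measure). P x t"
proof -
  have "AE p in (lborel :: ('a \<times> real) measure). P (fst p) (snd p)"
    using assms by (simp add: AE_completion_iff)
  then have "AE p in (lborel::'a measure) \<Otimes>\<^sub>M (lborel::real measure). P (fst p) (snd p)"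
    unfolding lborel_prod .
  then have "AE p in distr ((lborel::real measure) \<Otimes>\<^sub>M (lborel::'a measure)) ((lborel::'a measure) \<Otimes>\<^sub>M (lborel::real measure)) (\<lambda>(x, y). (y, x)). P (fst p) (snd p)"
    using pair_sigma_finite.distr_pair_swap[of "lborel::'a measure" "lborel::real measure"]
    by (metis lborel_pair.pair_sigma_finite_axioms pair_sigma_finite_def sigma_finite_lborel)
  note h = this
  have "AE q in (lborel::real measure) \<Otimes>\<^sub>M (lborel::'a measure). P (snd q) (fst q)"
  proof -
    have "AE q in (lborel::real measure) \<Otimes>\<^sub>M (lborel::'a measure). P (fst ((\<lambda>(x, y). (y, x)) q)) (snd ((\<lambda>(x, y). (y, x)) q))"
      by (rule AE_distrD[OF measurable_pair_swap' h])
    then show ?thesis by (simp add: case_prod_beta)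
  qed
  then have "AE t in (lborel::real measure). AE x in (lborel::'a measure). P x t"
    using pair_sigma_finite.AE_pair[of "lborel::real measure" "lborel::'a measure" "\<lambda>q. P (snd q) (fst q)"]
    by (simp add: lborel_pair.pair_sigma_finite_axioms pair_sigma_finite_def sigma_finite_lborel)
  then show ?thesis
    by (rule AE_completion[THEN eventually_mono]) (rule AE_completion)
qed


definition quad :: "real \<Rightarrow> 'a::euclidean_space \<Rightarrow> real \<Rightarrow> 'a \<Rightarrow> real" where
  "quad \<alpha> w \<beta> = (\<lambda>x. \<alpha> * (x \<bullet> x) + w \<bullet> x + \<beta>)"

lemma quad_line_deriv:
  "((\<lambda>h. quad \<alpha> w \<beta> (x + h *\<^sub>R v)) has_field_derivative (2 * \<alpha> * (v \<bullet> x) + w \<bullet> v)) (at h0)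
   \<Longrightarrow> True" by simp

lemma quad_line:
  "(\<lambda>h. quad \<alpha> w \<beta> (x + h *\<^sub>R v)) =
   (\<lambda>h. \<alpha> * (x \<bullet> x) + 2 * \<alpha> * h * (v \<bullet> x) + \<alpha> * h\<^sup>2 * (v \<bullet> v) + w \<bullet> x + h * (w \<bullet> v) + \<beta>)"
  by (auto simp: quad_def inner_add_left inner_add_right algebra_simps power2_eq_square inner_commute)

lemma quad_line_has_deriv:
  "((\<lambda>h. quad \<alpha> w \<beta> (x + h *\<^sub>R v)) has_field_derivative
     (2 * \<alpha> * (v \<bullet> x) + 2 * \<alpha> * h * (v \<bullet> v) + w \<bullet> v)) (at h)"
  unfolding quad_line
  by (auto intro!: derivative_eq_intros simp: algebra_simps)

lemma quad_pd: "pd v (quad \<alpha> w \<beta>) = quad 0 ((2 * \<alpha>) *\<^sub>R v) (w \<bullet> v)"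
proof
  fix x
  have "pd v (quad \<alpha> w \<beta>) x = 2 * \<alpha> * (v \<bullet> x) + 2 * \<alpha> * 0 * (v \<bullet> v) + w \<bullet> v"
    unfolding pd_def by (rule DERIV_imp_deriv[OF quad_line_has_deriv])
  then show "pd v (quad \<alpha> w \<beta>) x = quad 0 ((2 * \<alpha>) *\<^sub>R v) (w \<bullet> v) x"
    by (simp add: quad_def)
qed

lemma quad_foldr: "\<exists>\<alpha>' w' \<beta>'. foldr pd vs (quad \<alpha> w \<beta>) = quad \<alpha>' w' \<beta>'"
  by (induction vs) (fastforce simp: quad_pd)+

lemma quad_cont: "continuous_on S (quad \<alpha> w \<beta>)"
  unfolding quad_def by (intro continuous_intros)

lemma quad_diff: "(\<lambda>h. quad \<alpha> w \<beta> (x + h *\<^sub>R v)) differentiable (at 0)"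
  using quad_line_has_deriv real_differentiable_def by blast

lemma quad_Ck: "Ck_on k S (quad \<alpha> w \<beta>)"
  unfolding Ck_on_def
proof (intro allI impI conjI ballI)
  fix vs :: "'a list" 
  obtain \<alpha>' w' \<beta>' where e: "foldr pd vs (quad \<alpha> w \<beta>) = quad \<alpha>' w' \<beta>'" using quad_foldr by blast
  show "continuous_on S (foldr pd vs (quad \<alpha> w \<beta>))" unfolding e by (rule quad_cont)
  fix v x
  show "(\<lambda>h. foldr pd vs (quad \<alpha> w \<beta>) (x + h *\<^sub>R v)) differentiable at 0"
    unfolding e by (rule quad_diff)
qed

lemma quad_smooth: "smooth_on S (quad \<alpha> w \<beta>)"
  by (simp add: smooth_on_def quad_Ck)

lemma quad_grad: "grad (quad \<alpha> w \<beta>) x = (2 * \<alpha>) *\<^sub>R x + w"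
proof -
  have "grad (quad \<alpha> w \<beta>) x = (\<Sum>b\<in>Basis. (((2 * \<alpha>) *\<^sub>R x + w) \<bullet> b) *\<^sub>R b)"
    unfolding grad_def quad_pd by (auto simp: quad_def inner_add_right inner_commute intro!: sum.cong)
  also have "\<dots> = (2 * \<alpha>) *\<^sub>R x + w" by (rule euclidean_representation)
  finally show ?thesis .
qed

lemma quad_lap: fixes w x :: "'a::euclidean_space" shows "laplacian (quad \<alpha> w \<beta>) x = 2 * \<alpha> * DIM('a)"
proof -
  have "laplacian (quad \<alpha> w \<beta>) x = (\<Sum>b\<in>(Basis::'a set). 2 * \<alpha>)"
    unfolding laplacian_def quad_pd by (auto simp: quad_def intro!: sum.cong)
  then show ?thesis by simp
qed

lemma ball_smooth_domain:
  fixes c :: "'a::euclidean_space"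
  assumes r: "r > 0"
  shows "smooth_domain (ball c r)"
  unfolding smooth_domain_def
proof (intro conjI exI[of _ "quad 1 ((-2) *\<^sub>R c) (c \<bullet> c - r\<^sup>2)"])
  show "open (ball c r)" "connected (ball c r)" "bounded (ball c r)" "ball c r \<noteq> {}"
    using r by auto
  show "smooth_on UNIV (quad 1 ((-2) *\<^sub>R c) (c \<bullet> c - r\<^sup>2))" by (rule quad_smooth)
  have q: "quad 1 ((-2) *\<^sub>R c) (c \<bullet> c - r\<^sup>2) x = (norm (x - c))\<^sup>2 - r\<^sup>2" for x
    by (simp add: quad_def power2_norm_eq_inner inner_diff_left inner_diff_right inner_commute)
  show "ball c r = {x. quad 1 ((-2) *\<^sub>R c) (c \<bullet> c - r\<^sup>2) x < 0}"
  proof -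
    have "{x. quad 1 ((-2) *\<^sub>R c) (c \<bullet> c - r\<^sup>2) x < 0} = {x. (norm (x - c))\<^sup>2 < r\<^sup>2}"
      by (simp only: q) simp
    also have "\<dots> = ball c r"
      using r by (auto simp: dist_norm norm_minus_commute power_strict_mono
        dest: power_less_imp_less_base[of _ 2 r])
    finally show ?thesis by simp
  qed
  show "\<forall>x. quad 1 ((-2) *\<^sub>R c) (c \<bullet> c - r\<^sup>2) x = 0 \<longrightarrow> grad (quad 1 ((-2) *\<^sub>R c) (c \<bullet> c - r\<^sup>2)) x \<noteq> 0"
  proof (intro allI impI)
    fix x assume "quad 1 ((-2) *\<^sub>R c) (c \<bullet> c - r\<^sup>2) x = 0"
    then have "x \<noteq> c" using r q[of c] by auto
    then show "grad (quad 1 ((-2) *\<^sub>R c) (c \<bullet> c - r\<^sup>2)) x \<noteq> 0"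
      by (auto simp: quad_grad algebra_simps)
  qed
qed

definition tors :: "'a::euclidean_space \<Rightarrow> real \<Rightarrow> 'a \<Rightarrow> real" where
  "tors c r = quad (- 1 / (2 * DIM('a))) ((1 / DIM('a)) *\<^sub>R c) ((r\<^sup>2 - c \<bullet> c) / (2 * DIM('a)))"

lemma tors_val: fixes c x :: "'a::euclidean_space" shows "tors c r x = (r\<^sup>2 - (norm (x - c))\<^sup>2) / (2 * DIM('a))"
  unfolding tors_def quad_def
  by (simp add: power2_norm_eq_inner inner_diff_left inner_diff_right inner_commute field_simps)

lemma ball_torsion:
  fixes c :: "'a::euclidean_space"
  assumes r: "r > 0"
  shows "torsion_function (ball c r) (tors c r)"
  unfolding torsion_function_def
proof (intro conjI ballI)
  show "Ck_on 2 (ball c r) (tors c r)" unfolding tors_def by (rule quad_Ck)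
  show "continuous_on (closure (ball c r)) (tors c r)" unfolding tors_def by (rule quad_cont)
  fix x
  show "- laplacian (tors c r) x = 1" unfolding tors_def quad_lap by simp
  assume "x \<in> frontier (ball c r)"
  then have "norm (x - c) = r" using r by (simp add: frontier_ball dist_norm norm_minus_commute)
  then show "tors c r x = 0" by (simp add: tors_val)
qed



lemma Ck2_line_diff:
  assumes "Ck_on 2 S f" "x \<in> S" "b \<in> Basis"
  shows "(\<lambda>h. f (x + h *\<^sub>R b)) differentiable (at 0)"
    and "(\<lambda>h. pd b f (x + h *\<^sub>R b)) differentiable (at 0)"
proof -
  have "(\<lambda>h. foldr pd [] f (x + h *\<^sub>R b)) differentiable (at 0)"
    using assms(1) unfolding Ck_on_def
  proof -
    assume "\<forall>vs. set vs \<subseteq> Basis \<and> length vs \<le> 2 \<longrightarrow> continuous_on S (foldr pd vs f) \<and>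
      (length vs < 2 \<longrightarrow> (\<forall>v\<in>Basis. \<forall>x\<in>S. (\<lambda>h. foldr pd vs f (x + h *\<^sub>R v)) differentiable at 0))"
    from this[rule_format, of "[]"] show ?thesis using assms(2,3) by simp
  qed
  then show "(\<lambda>h. f (x + h *\<^sub>R b)) differentiable (at 0)" by simp
  have "(\<lambda>h. foldr pd [b] f (x + h *\<^sub>R b)) differentiable (at 0)"
    using assms(1) unfolding Ck_on_def
  proof -
    assume "\<forall>vs. set vs \<subseteq> Basis \<and> length vs \<le> 2 \<longrightarrow> continuous_on S (foldr pd vs f) \<and>
      (length vs < 2 \<longrightarrow> (\<forall>v\<in>Basis. \<forall>x\<in>S. (\<lambda>h. foldr pd vs f (x + h *\<^sub>R v)) differentiable at 0))"
    from this[rule_format, of "[b]"] show ?thesis using assms(2,3) by simp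
  qed
  then show "(\<lambda>h. pd b f (x + h *\<^sub>R b)) differentiable (at 0)" by simp
qed

lemma interior_min_pd2:
  fixes \<Phi> :: "'a::euclidean_space \<Rightarrow> real"
  assumes "open \<Omega>" "x0 \<in> \<Omega>" "\<forall>y\<in>\<Omega>. \<Phi> x0 \<le> \<Phi> y" "Ck_on 2 \<Omega> \<Phi>" "b \<in> Basis"
  shows "pd b (pd b \<Phi>) x0 \<ge> 0"
proof (rule ccontr)
  assume neg: "\<not> pd b (pd b \<Phi>) x0 \<ge> 0"
  obtain e where e: "e > 0" "ball x0 e \<subseteq> \<Omega>" using assms(1,2) open_contains_ball by blast
  have nb: "norm b = 1" using assms(5) by simp
  have inO: "x0 + h *\<^sub>R b \<in> \<Omega>" if "\<bar>h\<bar> < e" for h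
    using that e nb by (intro subsetD[OF e(2)]) (simp add: dist_norm)
  define g where "g h = \<Phi> (x0 + h *\<^sub>R b)" for h
  define g' where "g' h = pd b \<Phi> (x0 + h *\<^sub>R b)" for h
  have dg: "(g has_field_derivative g' h) (at h)" if "\<bar>h\<bar> < e" for h
  proof -
    let ?y = "x0 + h *\<^sub>R b"
    have "(\<lambda>s. \<Phi> (?y + s *\<^sub>R b)) differentiable (at 0)"
      using Ck2_line_diff(1)[OF assms(4) inO[OF that] assms(5)] .
    then have "((\<lambda>s. \<Phi> (?y + s *\<^sub>R b)) has_field_derivative pd b \<Phi> ?y) (at 0)"
      unfolding pd_def using DERIV_deriv_iff_real_differentiable by blast
    moreover have "(\<lambda>s. \<Phi> (?y + s *\<^sub>R b)) = (\<lambda>s. g (s + h))"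
      by (auto simp: g_def algebra_simps)
    ultimately have "((\<lambda>s. g (s + h)) has_field_derivative g' h) (at 0)"
      by (simp add: g'_def)
    then show ?thesis using DERIV_shift[of g "g' h" 0 h] by simp
  qed
  have "g' differentiable (at 0)"
    using Ck2_line_diff(2)[OF assms(4,2,5)] by (simp add: g'_def[abs_def])
  then have dg': "(g' has_field_derivative pd b (pd b \<Phi>) x0) (at 0)"
    unfolding pd_def g'_def using DERIV_deriv_iff_real_differentiable
    by (metis pd_def)
  have gmin: "g 0 \<le> g h" if "\<bar>h\<bar> < e" for h
    using assms(3) inO[OF that] by (simp add: g_def)
  have g'0: "g' 0 = 0"
    by (rule DERIV_local_min[OF dg[of 0] e(1)]) (use e gmin in auto)
  obtain \<delta> where \<delta>: "\<delta> > 0" "\<forall>h>0. h < \<delta> \<longrightarrow> g' 0 > g' (0 + h)"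
    using DERIV_neg_dec_right[OF dg'] neg by force
  define h where "h = min \<delta> e / 2"
  have h: "0 < h" "h < \<delta>" "h < e" using \<delta> e by (auto simp: h_def)
  have der: "\<exists>y. (g has_field_derivative y) (at x) \<and> y < 0" if x: "h/2 \<le> x" "x \<le> h" for x
  proof -
    have "\<bar>x\<bar> < e" using x h by auto
    moreover have "g' x < 0" using \<delta>(2)[rule_format, of x] x h g'0 by simp
    ultimately show ?thesis using dg by blast
  qed
  have dec1: "g (h/2) > g h"
    using DERIV_neg_imp_decreasing[of "h/2" h g] der h by auto
  have der2: "\<exists>y. (g has_field_derivative y) (at x) \<and> y \<le> 0" if x: "0 \<le> x" "x \<le> h/2" for x
  proof (cases "x = 0")
    case True then show ?thesis using dg[of 0] e g'0 by auto
  next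
    case False
    have "\<bar>x\<bar> < e" using x h by auto
    moreover have "g' x < 0" using \<delta>(2)[rule_format, of x] x h g'0 False by simp
    ultimately show ?thesis using dg by (meson less_imp_le)
  qed
  moreover have "g 0 \<ge> g (h/2)"
    using DERIV_nonpos_imp_nonincreasing[of 0 "h/2" g] der2 h by auto
  ultimately show False using dec1 gmin[of h] h by auto
qed

lemma torsion_pos:
  fixes \<Phi> :: "'a::euclidean_space \<Rightarrow> real"
  assumes "open \<Omega>" "bounded \<Omega>" "torsion_function \<Omega> \<Phi>"
  shows "\<forall>x\<in>\<Omega>. \<Phi> x > 0"
proof -
  have C2: "Ck_on 2 \<Omega> \<Phi>" and cont: "continuous_on (closure \<Omega>) \<Phi>"
    and lap: "\<forall>x\<in>\<Omega>. - laplacian \<Phi> x = 1" and bd: "\<forall>x\<in>frontier \<Omega>. \<Phi> x = 0"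
    using assms(3) unfolding torsion_function_def by auto
  have nomin: False if "x0 \<in> \<Omega>" "\<forall>y\<in>\<Omega>. \<Phi> x0 \<le> \<Phi> y" for x0
  proof -
    have "laplacian \<Phi> x0 \<ge> 0" unfolding laplacian_def
      by (intro sum_nonneg interior_min_pd2[OF assms(1) that C2])
    moreover have "- laplacian \<Phi> x0 = 1" using lap that(1) by blast
    ultimately show False by linarith
  qed
  show ?thesis
  proof (rule ccontr)
    assume "\<not> (\<forall>x\<in>\<Omega>. \<Phi> x > 0)"
    then obtain x where x: "x \<in> \<Omega>" "\<Phi> x \<le> 0" by (meson not_less)
    have "compact (closure \<Omega>)" using assms(2) by (simp add: compact_closure)
    moreover have "closure \<Omega> \<noteq> {}" using x closure_subset by blast
    ultimately obtain y where y: "y \<in> closure \<Omega>" "\<forall>z\<in>closure \<Omega>. \<Phi> y \<le> \<Phi> z"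
      using continuous_attains_inf[OF _ _ cont] by blast
    show False
    proof (cases "y \<in> \<Omega>")
      case True then show False using nomin[of y] y closure_subset by blast
    next
      case False
      then have "y \<in> frontier \<Omega>" using y assms(1) by (simp add: frontier_def interior_open)
      then have "\<Phi> y = 0" using bd by blast
      have "\<forall>z\<in>\<Omega>. \<Phi> x \<le> \<Phi> z"
      proof
        fix z assume "z \<in> \<Omega>"
        then have "\<Phi> y \<le> \<Phi> z" using y(2) closure_subset by blast
        then show "\<Phi> x \<le> \<Phi> z" using x(2) \<open>\<Phi> y = 0\<close> by linarith
      qed
      then show False using nomin[of x] x by blast
    qed
  qed
qed



lemma ess_sup_lessD:
  assumes "ess_sup M S f < ereal B"
  shows "AE x in M. x \<in> S \<longrightarrow> f x \<le> ereal B"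
proof -
  from assms obtain z where z: "AE x in M. x \<in> S \<longrightarrow> f x \<le> z" "z < ereal B"
    unfolding ess_sup_def Inf_less_iff by auto
  show ?thesis using z(1)
  proof (rule eventually_mono)
    fix x assume "x \<in> S \<longrightarrow> f x \<le> z"
    then show "x \<in> S \<longrightarrow> f x \<le> ereal B" using z(2) by (meson less_imp_le order_trans)
  qed
qed

lemma ess_sup_le:
  assumes "AE x in M. x \<in> S \<longrightarrow> f x \<le> U"
  shows "ess_sup M S f \<le> U"
  unfolding ess_sup_def using assms by (auto intro: Inf_lower)

lemma ess_sup_ge:
  assumes "S \<in> sets M" "emeasure M S \<noteq> 0" "AE x in M. x \<in> S \<longrightarrow> ereal L \<le> f x"
  shows "ereal L \<le> ess_sup M S f"
  unfolding ess_sup_def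
proof (rule Inf_greatest, clarify)
  fix z assume z: "AE x in M. x \<in> S \<longrightarrow> f x \<le> z"
  show "ereal L \<le> z"
  proof (rule ccontr)
    assume "\<not> ereal L \<le> z"
    then have lt: "z < ereal L" by simp
    have "AE x in M. x \<notin> S" using z assms(3)
    proof (eventually_elim)
      case (elim x)
      show "x \<notin> S"
      proof
        assume "x \<in> S"
        then have "ereal L \<le> z" using elim by (meson order_trans)
        then show False using lt by simp
      qed
    qed
    then have "emeasure M S = 0" using AE_iff_measurable[of S M "\<lambda>x. x \<notin> S"] assms(1)
      sets.sets_into_space[OF assms(1)] by (auto simp: Int_absorb1)
    with assms(2) show False by simp
  qed
qed

lemma set_int_abs_bound:
  fixes f :: "'b::euclidean_space \<Rightarrow> real"
  assumes S: "S \<in> sets lebesgue" "emeasure lebesgue S < \<infinity>"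
    and bd: "AE x in lebesgue. x \<in> S \<longrightarrow> \<bar>f x\<bar> \<le> B"
  shows "\<bar>LINT x:S|lebesgue. f x\<bar> \<le> max B 0 * measure lebesgue S"
proof (cases "set_integrable lebesgue S f")
  case True
  have "\<bar>LINT x:S|lebesgue. f x\<bar> \<le> integral\<^sup>L lebesgue (\<lambda>x. norm (indicator S x *\<^sub>R f x))"
    unfolding set_lebesgue_integral_def using integral_norm_bound by (metis real_norm_def)
  also have "\<dots> \<le> integral\<^sup>L lebesgue (\<lambda>x. indicator S x * max B 0)"
  proof (rule integral_mono_AE)
    show "integrable lebesgue (\<lambda>x. norm (indicator S x *\<^sub>R f x))"
      using True unfolding set_integrable_def by (rule integrable_norm)
    show "integrable lebesgue (\<lambda>x. indicator S x * max B 0)"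
      using S by (intro integrable_mult_left integrable_real_indicator)
    show "AE x in lebesgue. norm (indicator S x *\<^sub>R f x) \<le> indicator S x * max B 0"
      using bd by (rule eventually_mono) (auto simp: indicator_def)
  qed
  also have "\<dots> = max B 0 * measure lebesgue S"
    by (simp only: integral_mult_left_zero integral_indicator mult.commute) simp
  finally show ?thesis .
next
  case False
  then have "(LINT x:S|lebesgue. f x) = 0"
    unfolding set_lebesgue_integral_def set_integrable_def by (rule not_integrable_integral_eq)
  then show ?thesis by simp
qed


lemma Ioo_facts:
  fixes t :: real assumes "t > 0"
  shows "{0<..<t} \<in> sets lebesgue" "emeasure lebesgue {0<..<t} = ennreal t" "measure lebesgue {0<..<t} = t"
proof -
  show s: "{0<..<t} \<in> sets lebesgue" by simp
  show e: "emeasure lebesgue {0<..<t} = ennreal t" using assms by (simp add: emeasure_completion)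
  show "measure lebesgue {0<..<t} = t" using e assms by (simp add: measure_def)
qed
theorem corollary2p9:
  fixes \<Omega> :: "'a::euclidean_space set" and \<Phi> u0 :: "'a \<Rightarrow> real" and Du0 :: "'a \<Rightarrow> 'a"
    and Tmax :: ereal and u :: "'a \<Rightarrow> real \<Rightarrow> real" and Du :: "'a \<Rightarrow> real \<Rightarrow> 'a"
  assumes dom: "smooth_domain \<Omega>"
    and Phi: "torsion_function \<Omega> \<Phi>"
    and u0_Linf: "Linf_norm \<Omega> u0 < \<infinity>"
    and u0_W: "W12_0 \<Omega> u0 Du0"
    and u0_nonneg: "AE x in lebesgue. x \<in> \<Omega> \<longrightarrow> u0 x \<ge> 0"
    and u0_pos: "\<forall>K. compact K \<and> K \<subseteq> \<Omega> \<longrightarrow>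
                   (\<exists>M. AE x in lebesgue. x \<in> K \<longrightarrow> u0 x > 0 \<and> 1 / u0 x \<le> M)"
    and u0_Phi: "Phi_norm \<Omega> \<Phi> u0 < \<infinity>"
    and Tmax_pos: "0 < Tmax"
    and sol: "weak_solution \<Omega> Tmax u0 u Du"
    and locpos: "locally_positive \<Omega> Tmax u"
    and extensibility: "Tmax = \<infinity> \<or> ess_limsup_left Tmax (\<lambda>t. Linf_norm \<Omega> (\<lambda>x. u x t)) = \<infinity>"
    and energy_bound:
      "\<forall>\<Omega>' \<phi>. smooth_domain \<Omega>' \<and> closure \<Omega>' \<subseteq> \<Omega> \<and> torsion_function \<Omega>' \<phi> \<longrightarrow>
         (\<exists>C>0. AE t in lebesgue. t \<in> tint Tmax \<longrightarrow>
            energy \<Omega> Du t \<le> energy \<Omega> (\<lambda>x _. Du0 x) 0 *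
              exp (1 / (2 * C)
                * real_of_ereal (ess_sup lebesgue {0<..<t} (\<lambda>\<tau>. ereal (LINT x:\<Omega>|lebesgue. u x \<tau>)))
                * ((LINT x:\<Omega>'|lebesgue. \<phi> x * ln (u x t))
                   - (LINT x:\<Omega>'|lebesgue. \<phi> x * ln (u0 x))
                   + (LINT \<tau>:{0<..<t}|lebesgue. LINT x:\<Omega>'|lebesgue. u x \<tau>))))"
    and Phi_bound:
      "AE t in lebesgue. t \<in> tint Tmax \<longrightarrow>
         Phi_norm \<Omega> \<Phi> (\<lambda>x. u x t) \<le>
           max (Phi_norm \<Omega> \<Phi> u0) (ess_sup lebesgue {0<..<t} (\<lambda>\<tau>. ereal (energy \<Omega> Du \<tau>)))"
    and blowup: "ess_limsup_left Tmax (\<lambda>t. Linf_norm \<Omega> (\<lambda>x. u x t)) = \<infinity>"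
  shows "ess_limsup_left Tmax (\<lambda>t. ereal (energy \<Omega> Du t)) = \<infinity>"
proof (rule ccontr)
  assume nE: "ess_limsup_left Tmax (\<lambda>t. ereal (energy \<Omega> Du t)) \<noteq> \<infinity>"
  have \<Omega>open: "open \<Omega>" and \<Omega>bdd: "bounded \<Omega>" and \<Omega>ne: "\<Omega> \<noteq> {}"
    using dom unfolding smooth_domain_def by auto
  have \<Omega>lm: "\<Omega> \<in> sets lebesgue" "emeasure lebesgue \<Omega> < \<infinity>"
    using lmeasurable_open[OF \<Omega>bdd \<Omega>open] by (auto simp: fmeasurable_def)
  define m\<Omega> where "m\<Omega> = measure lebesgue \<Omega>"
  have m\<Omega>0: "m\<Omega> \<ge> 0" by (simp add: m\<Omega>_def)
  have "ess_limsup_left Tmax (\<lambda>t. ereal (energy \<Omega> Du t)) < \<infinity>"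
    using nE by (simp add: less_top[symmetric])
  then obtain a where a: "0 < a" "ereal a < Tmax"
    "ess_sup lebesgue {t. a < t \<and> ereal t < Tmax} (\<lambda>t. ereal (energy \<Omega> Du t)) < \<infinity>"
    unfolding ess_limsup_left_def INF_less_iff by auto
  obtain E1 where E1: "AE t in lebesgue. t \<in> {t. a < t \<and> ereal t < Tmax} \<longrightarrow> energy \<Omega> Du t \<le> E1"
  proof -
    let ?e = "ess_sup lebesgue {t. a < t \<and> ereal t < Tmax} (\<lambda>t. ereal (energy \<Omega> Du t))"
    have "?e < ereal (real_of_ereal ?e + 1)" using a(3) by (cases ?e) auto
    from ess_sup_lessD[OF this] show ?thesis by (intro that) simp
  qed
  obtain T' where T': "ereal a < ereal T'" "ereal T' < Tmax" using ereal_dense2[OF a(2)] by blast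
  have T'pos: "0 < T'" "a < T'" using T' a by auto
  obtain M1 where M1: "AE p in lebesgue. p \<in> \<Omega> \<times> {0<..<T'} \<longrightarrow> \<bar>u (fst p) (snd p)\<bar> \<le> M1"
    using sol T'pos T'(2) unfolding weak_solution_def by blast
  define M where "M = max M1 0"
  have M0: "M \<ge> 0" by (simp add: M_def)
  obtain c where c: "c \<in> \<Omega>" using \<Omega>ne by blast
  obtain e where e: "e > 0" "ball c e \<subseteq> \<Omega>" using \<Omega>open c open_contains_ball by blast
  define r where "r = e / 2"
  have r: "r > 0" using e by (simp add: r_def)
  have Ksub: "cball c r \<subseteq> \<Omega>" using e r by (auto simp: r_def intro!: subsetD[OF e(2)])
  have Bsub: "ball c r \<subseteq> \<Omega>" using Ksub by auto
  have Blm: "ball c r \<in> sets lebesgue" "emeasure lebesgue (ball c r) < \<infinity>"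
    using lmeasurable_ball[of c r] by (auto simp: fmeasurable_def)
  define mB where "mB = measure lebesgue (ball c r)"
  have mB0: "mB \<ge> 0" by (simp add: mB_def)
  obtain M2 where M2: "AE p in lebesgue. p \<in> cball c r \<times> {0<..<T'} \<longrightarrow>
        u (fst p) (snd p) > 0 \<and> 1 / u (fst p) (snd p) \<le> M2"
    using locpos Ksub T'pos T'(2) unfolding locally_positive_def by (meson compact_cball less_imp_le)
  have ballok: "smooth_domain (ball c r) \<and> closure (ball c r) \<subseteq> \<Omega> \<and> torsion_function (ball c r) (tors c r)"
    using ball_smooth_domain[OF r, of c] ball_torsion[OF r, of c] Ksub r by (simp add: closure_ball)
  obtain C where C: "C > 0" and EB: "AE t in lebesgue. t \<in> tint Tmax \<longrightarrow>
            energy \<Omega> Du t \<le> energy \<Omega> (\<lambda>x _. Du0 x) 0 *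
              exp (1 / (2 * C)
                * real_of_ereal (ess_sup lebesgue {0<..<t} (\<lambda>\<tau>. ereal (LINT x:\<Omega>|lebesgue. u x \<tau>)))
                * ((LINT x:ball c r|lebesgue. tors c r x * ln (u x t))
                   - (LINT x:ball c r|lebesgue. tors c r x * ln (u0 x))
                   + (LINT \<tau>:{0<..<t}|lebesgue. LINT x:ball c r|lebesgue. u x \<tau>)))"
    using energy_bound[rule_format, OF ballok] by blast
  have S1: "AE t in lebesgue. AE x in lebesgue. x \<in> \<Omega> \<and> t \<in> {0<..<T'} \<longrightarrow> \<bar>u x t\<bar> \<le> M1"
    by (rule slice_AE) (use M1 in \<open>auto simp: mem_Times_iff elim!: eventually_mono\<close>)
  have S2: "AE t in lebesgue. AE x in lebesgue. x \<in> cball c r \<and> t \<in> {0<..<T'} \<longrightarrow> u x t > 0 \<and> 1 / u x t \<le> M2"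
    by (rule slice_AE) (use M2 in \<open>auto simp: mem_Times_iff elim!: eventually_mono\<close>)
  have F3: "AE \<tau> in lebesgue. \<tau> \<in> {0<..<T'} \<longrightarrow> \<bar>LINT x:\<Omega>|lebesgue. u x \<tau>\<bar> \<le> M * m\<Omega>"
    using S1
  proof (rule eventually_mono, intro impI)
    fix \<tau> assume h: "AE x in lebesgue. x \<in> \<Omega> \<and> \<tau> \<in> {0<..<T'} \<longrightarrow> \<bar>u x \<tau>\<bar> \<le> M1" and \<tau>: "\<tau> \<in> {0<..<T'}"
    have "AE x in lebesgue. x \<in> \<Omega> \<longrightarrow> \<bar>u x \<tau>\<bar> \<le> M1" using h by (rule eventually_mono) (use \<tau> in auto)
    from set_int_abs_bound[OF \<Omega>lm this] show "\<bar>LINT x:\<Omega>|lebesgue. u x \<tau>\<bar> \<le> M * m\<Omega>"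
      by (simp add: M_def m\<Omega>_def)
  qed
  have F4: "AE \<tau> in lebesgue. \<tau> \<in> {0<..<T'} \<longrightarrow> \<bar>LINT x:ball c r|lebesgue. u x \<tau>\<bar> \<le> M * mB"
    using S1
  proof (rule eventually_mono, intro impI)
    fix \<tau> assume h: "AE x in lebesgue. x \<in> \<Omega> \<and> \<tau> \<in> {0<..<T'} \<longrightarrow> \<bar>u x \<tau>\<bar> \<le> M1" and \<tau>: "\<tau> \<in> {0<..<T'}"
    have "AE x in lebesgue. x \<in> ball c r \<longrightarrow> \<bar>u x \<tau>\<bar> \<le> M1" using h by (rule eventually_mono) (use \<tau> Bsub in auto)
    from set_int_abs_bound[OF Blm this] show "\<bar>LINT x:ball c r|lebesgue. u x \<tau>\<bar> \<le> M * mB"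
      by (simp add: M_def mB_def)
  qed
  define Y where "Y = (LINT x:ball c r|lebesgue. tors c r x * ln (u0 x))"
  define pm where "pm = r\<^sup>2 / (2 * DIM('a))"
  define L where "L = M + \<bar>ln M2\<bar>"
  define A0 where "A0 = M * m\<Omega>"
  define B0 where "B0 = max (pm * L) 0 * mB + \<bar>Y\<bar> + M * mB * T'"
  define E0 where "E0 = energy \<Omega> (\<lambda>x _. Du0 x) 0"
  define E2 where "E2 = \<bar>E0\<bar> * exp (1 / (2 * C) * A0 * B0)"
  have A0: "A0 \<ge> 0" using M0 m\<Omega>0 by (simp add: A0_def)
  have B0: "B0 \<ge> 0" using M0 mB0 T'pos by (simp add: B0_def)
  have pm: "\<bar>tors c r x\<bar> \<le> pm" if "x \<in> ball c r" for x
  proof -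
    have "norm (x - c) < r" using that by (simp add: dist_norm norm_minus_commute)
    then have "(norm (x - c))\<^sup>2 \<le> r\<^sup>2" by (simp add: power_mono)
    then show ?thesis by (simp add: tors_val pm_def abs_le_iff divide_right_mono field_simps)
  qed
  have near0: "AE t in lebesgue. t \<in> {0<..<T'} \<longrightarrow> energy \<Omega> Du t \<le> E2"
    using S1 S2 EB
  proof (eventually_elim)
    case (elim t)
    show ?case
    proof
      assume t: "t \<in> {0<..<T'}"
      then have tt: "t \<in> tint Tmax" using T'(2) by (auto simp: tint_def intro: less_trans[of "ereal t" "ereal T'"])
      have t0: "0 < t" "t < T'" using t by auto
      have ux: "AE x in lebesgue. x \<in> ball c r \<longrightarrow> \<bar>tors c r x * ln (u x t)\<bar> \<le> pm * L"
        using elim(1) elim(2)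
      proof (eventually_elim, intro impI)
        case (elim x)
        assume x: "x \<in> ball c r"
        then have xO: "x \<in> \<Omega>" and xK: "x \<in> cball c r" using Bsub by auto
        have ub: "\<bar>u x t\<bar> \<le> M1" using elim(1) xO t by auto
        have up: "u x t > 0" "1 / u x t \<le> M2" using elim(2) xK t by auto
        have M2p: "M2 > 0" using up by (smt (verit) divide_pos_pos)
        have "ln (u x t) \<le> u x t - 1" using up(1) by (rule ln_le_minus_one)
        then have l1: "ln (u x t) \<le> M" using ub by (simp add: M_def)
        have "ln (1 / u x t) \<le> ln M2" using up M2p by (simp add: ln_le_cancel_iff)
        then have l2: "- ln (u x t) \<le> ln M2" using up(1) by (simp add: ln_div)
        have lnb: "\<bar>ln (u x t)\<bar> \<le> L" using l1 l2 M0 abs_ge_self[of "ln M2"] abs_ge_zero[of "ln M2"] unfolding L_def abs_le_iff by linarith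
        have "\<bar>tors c r x * ln (u x t)\<bar> = \<bar>tors c r x\<bar> * \<bar>ln (u x t)\<bar>" by (rule abs_mult)
        also have "\<dots> \<le> pm * L" by (rule mult_mono[OF pm[OF x] lnb]) (use pm[OF x] in auto)
        finally show "\<bar>tors c r x * ln (u x t)\<bar> \<le> pm * L" .
      qed
      define X where "X = (LINT x:ball c r|lebesgue. tors c r x * ln (u x t))"
      define Z where "Z = (LINT \<tau>:{0<..<t}|lebesgue. LINT x:ball c r|lebesgue. u x \<tau>)"
      define A where "A = real_of_ereal (ess_sup lebesgue {0<..<t} (\<lambda>\<tau>. ereal (LINT x:\<Omega>|lebesgue. u x \<tau>)))"
      have hX: "\<bar>X\<bar> \<le> max (pm * L) 0 * mB"
        unfolding X_def mB_def by (rule set_int_abs_bound[OF Blm ux])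
      have "AE \<tau> in lebesgue. \<tau> \<in> {0<..<t} \<longrightarrow> \<bar>LINT x:ball c r|lebesgue. u x \<tau>\<bar> \<le> M * mB"
        using F4 by (rule eventually_mono) (use t0 in auto)
      from set_int_abs_bound[OF Ioo_facts(1)[OF t0(1)] _ this] Ioo_facts[OF t0(1)]
      have "\<bar>Z\<bar> \<le> max (M * mB) 0 * t" by (simp add: Z_def)
      also have "\<dots> \<le> M * mB * T'" using M0 mB0 t0 by (simp add: mult_left_mono)
      finally have hZ: "\<bar>Z\<bar> \<le> M * mB * T'" .
      have F3t: "AE \<tau> in lebesgue. \<tau> \<in> {0<..<t} \<longrightarrow> \<bar>LINT x:\<Omega>|lebesgue. u x \<tau>\<bar> \<le> A0"
        using F3 by (rule eventually_mono) (use t0 in \<open>auto simp: A0_def\<close>)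
      have eU: "ess_sup lebesgue {0<..<t} (\<lambda>\<tau>. ereal (LINT x:\<Omega>|lebesgue. u x \<tau>)) \<le> ereal A0"
        by (rule ess_sup_le) (use F3t in \<open>auto elim!: eventually_mono\<close>)
      have eL: "ereal (- A0) \<le> ess_sup lebesgue {0<..<t} (\<lambda>\<tau>. ereal (LINT x:\<Omega>|lebesgue. u x \<tau>))"
        by (rule ess_sup_ge) (use F3t Ioo_facts[OF t0(1)] t0 in \<open>auto elim!: eventually_mono\<close>)
      have hA: "\<bar>A\<bar> \<le> A0" unfolding A_def
        using eU eL A0 by (cases "ess_sup lebesgue {0<..<t} (\<lambda>\<tau>. ereal (LINT x:\<Omega>|lebesgue. u x \<tau>))") auto
      have hB: "\<bar>X - Y + Z\<bar> \<le> B0" using hX hZ by (simp add: B0_def)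
      have "\<bar>A * (X - Y + Z)\<bar> \<le> A0 * B0" unfolding abs_mult
        by (rule mult_mono[OF hA hB]) (use A0 in auto)
      then have arg: "1 / (2 * C) * A * (X - Y + Z) \<le> 1 / (2 * C) * A0 * B0"
        using C by (simp add: mult.assoc abs_le_iff divide_right_mono)
      have "energy \<Omega> Du t \<le> E0 * exp (1 / (2 * C) * A * (X - Y + Z))"
        using elim(3) tt by (simp add: E0_def A_def X_def Y_def Z_def)
      also have "\<dots> \<le> \<bar>E0\<bar> * exp (1 / (2 * C) * A * (X - Y + Z))" by simp
      also have "\<dots> \<le> \<bar>E0\<bar> * exp (1 / (2 * C) * A0 * B0)"
        using arg by (simp add: mult_left_mono)
      finally show "energy \<Omega> Du t \<le> E2" by (simp add: E2_def)
    qed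
  qed
  define E where "E = max E1 E2"
  have Eall: "AE t in lebesgue. t \<in> tint Tmax \<longrightarrow> energy \<Omega> Du t \<le> E"
    using E1 near0
  proof (eventually_elim, intro impI)
    case (elim t)
    assume t: "t \<in> tint Tmax"
    show "energy \<Omega> Du t \<le> E"
    proof (cases "t < T'")
      case True then show ?thesis using elim(2) t by (auto simp: tint_def E_def)
    next
      case False then have "a < t" using T'pos by auto
      then show ?thesis using elim(1) t by (auto simp: tint_def E_def)
    qed
  qed
  have esE: "ess_sup lebesgue {0<..<t} (\<lambda>\<tau>. ereal (energy \<Omega> Du \<tau>)) \<le> ereal E" if t: "t \<in> tint Tmax" for t
  proof (rule ess_sup_le)
    show "AE \<tau> in lebesgue. \<tau> \<in> {0<..<t} \<longrightarrow> ereal (energy \<Omega> Du \<tau>) \<le> ereal E"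
      using Eall
    proof (rule eventually_mono, intro impI)
      fix \<tau> assume h: "\<tau> \<in> tint Tmax \<longrightarrow> energy \<Omega> Du \<tau> \<le> E" and \<tau>: "\<tau> \<in> {0<..<t}"
      have "\<tau> \<in> tint Tmax" using t \<tau> by (auto simp: tint_def intro: less_trans[of "ereal \<tau>" "ereal t"])
      then show "ereal (energy \<Omega> Du \<tau>) \<le> ereal E" using h by simp
    qed
  qed
  define P0 where "P0 = Phi_norm \<Omega> \<Phi> u0"
  define Q where "Q = max (real_of_ereal P0) E"
  have P0Q: "P0 \<le> ereal Q"
  proof -
    have "P0 \<le> ereal (real_of_ereal P0)" using u0_Phi by (cases P0) (auto simp: P0_def)
    then show ?thesis by (simp add: Q_def order_trans)
  qed
  have PB: "AE t in lebesgue. t \<in> tint Tmax \<longrightarrow> Phi_norm \<Omega> \<Phi> (\<lambda>x. u x t) \<le> ereal Q"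
    using Phi_bound
  proof (rule eventually_mono, intro impI)
    fix t assume h: "t \<in> tint Tmax \<longrightarrow> Phi_norm \<Omega> \<Phi> (\<lambda>x. u x t) \<le>
           max (Phi_norm \<Omega> \<Phi> u0) (ess_sup lebesgue {0<..<t} (\<lambda>\<tau>. ereal (energy \<Omega> Du \<tau>)))"
      and t: "t \<in> tint Tmax"
    have "max (Phi_norm \<Omega> \<Phi> u0) (ess_sup lebesgue {0<..<t} (\<lambda>\<tau>. ereal (energy \<Omega> Du \<tau>))) \<le> ereal Q"
      using P0Q esE[OF t] by (auto simp: P0_def Q_def intro: order_trans)
    then show "Phi_norm \<Omega> \<Phi> (\<lambda>x. u x t) \<le> ereal Q" using h t by (meson order_trans)
  qed
  have \<Phi>pos: "\<forall>x\<in>\<Omega>. \<Phi> x > 0" by (rule torsion_pos[OF \<Omega>open \<Omega>bdd Phi])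
  obtain Pm where Pm: "\<forall>x\<in>\<Omega>. \<Phi> x \<le> Pm"
  proof -
    have "compact (closure \<Omega>)" using \<Omega>bdd by (simp add: compact_closure)
    moreover have "closure \<Omega> \<noteq> {}" using \<Omega>ne by simp
    moreover have "continuous_on (closure \<Omega>) \<Phi>" using Phi by (simp add: torsion_function_def)
    ultimately obtain y where "y \<in> closure \<Omega>" "\<forall>z\<in>closure \<Omega>. \<Phi> z \<le> \<Phi> y"
      using continuous_attains_sup by blast
    then show ?thesis using closure_subset by (intro that[of "\<Phi> y"]) blast
  qed
  define W where "W = Pm * (Q + 1)"
  have LB: "AE t in lebesgue. t \<in> tint Tmax \<longrightarrow> Linf_norm \<Omega> (\<lambda>x. u x t) \<le> ereal W"
    using PB
  proof (rule eventually_mono, intro impI)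
    fix t assume h: "t \<in> tint Tmax \<longrightarrow> Phi_norm \<Omega> \<Phi> (\<lambda>x. u x t) \<le> ereal Q" and t: "t \<in> tint Tmax"
    have "Phi_norm \<Omega> \<Phi> (\<lambda>x. u x t) < ereal (Q + 1)" 
    proof -
      have "ereal Q < ereal (Q + 1)" by simp
      then show ?thesis using h t by (meson order_le_less_trans)
    qed
    then have "AE x in lebesgue. x \<in> \<Omega> \<longrightarrow> ereal \<bar>u x t / \<Phi> x\<bar> \<le> ereal (Q + 1)"
      unfolding Phi_norm_def by (rule ess_sup_lessD)
    then have "AE x in lebesgue. x \<in> \<Omega> \<longrightarrow> ereal \<bar>u x t\<bar> \<le> ereal W"
    proof (rule eventually_mono, intro impI)
      fix x assume hx: "x \<in> \<Omega> \<longrightarrow> ereal \<bar>u x t / \<Phi> x\<bar> \<le> ereal (Q + 1)" and x: "x \<in> \<Omega>"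
      have q: "\<bar>u x t / \<Phi> x\<bar> \<le> Q + 1" using hx x by simp
      have p: "\<Phi> x > 0" "\<Phi> x \<le> Pm" using \<Phi>pos Pm x by auto
      have "\<bar>u x t\<bar> = \<Phi> x * \<bar>u x t / \<Phi> x\<bar>" using p by (simp add: abs_div)
      also have "\<dots> \<le> Pm * (Q + 1)"
        by (rule mult_mono[OF p(2) q]) (use p in auto)
      finally show "ereal \<bar>u x t\<bar> \<le> ereal W" by (simp add: W_def)
    qed
    then show "Linf_norm \<Omega> (\<lambda>x. u x t) \<le> ereal W"
      unfolding Linf_norm_def by (rule ess_sup_le)
  qed
  have "ess_limsup_left Tmax (\<lambda>t. Linf_norm \<Omega> (\<lambda>x. u x t))
        \<le> ess_sup lebesgue {t. a < t \<and> ereal t < Tmax} (\<lambda>t. Linf_norm \<Omega> (\<lambda>x. u x t))"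
    unfolding ess_limsup_left_def by (rule INF_lower) (use a in auto)
  also have "\<dots> \<le> ereal W"
  proof (rule ess_sup_le)
    show "AE t in lebesgue. t \<in> {t. a < t \<and> ereal t < Tmax} \<longrightarrow> Linf_norm \<Omega> (\<lambda>x. u x t) \<le> ereal W"
      using LB by (rule eventually_mono) (use a in \<open>auto simp: tint_def\<close>)
  qed
  finally show False using blowup by simp
qed
end
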